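(* Let $I=(c,d)$ and $J$ be open intervals of $\mathbb{R}$ with $c\in\mathbb{R}$, let $O=I\times J$, and let $L:O\to\mathbb{R}$, $(x,y)\mapsto L(x,y)$, be of class $C^1$. Let $a<b$ and $\alpha,\beta\in\mathbb{R}$. Let $X$ be the set of all $\gamma\in C([a,b])$ which are continuously differentiable on $(a,b]$, satisfy $(\gamma(t),\gamma'(t))\in O$ for all $t\in(a,b]$, $\gamma(a)=\alpha$, $\gamma(b)=\beta$, and for which the (possibly improper at $a$) integral $$\mathcal{L}(\gamma)=\int_a^b L(\gamma(t),\gamma'(t))\,dt$$ is defined. If $\gamma\in X$ is an extremum (a minimum or a maximum) of $\mathcal{L}$ on $X$, then $\gamma$ satisfies the Euler–Lagrange equation on $(a,b]$, i.e. for all $t\in(a,b]$, $$\frac{\partial L}{\partial x}(\gamma(t),\gamma'(t))=\frac{d}{dt}\,\frac{\partial L}{\partial y}(\gamma(t),\gamma'(t)).$$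
   Context: Here $C([a,b])$ denotes the space of real-valued continuous functions on $[a,b]$. The Euler–Lagrange equation includes the assertion that $t\mapsto \frac{\partial L}{\partial y}(\gamma(t),\gamma'(t))$ is differentiable on $(a,b]$ (one-sided at $b$). *)

theory Defs
  imports "HOL-Analysis.Analysis"
begin

definition curve_deriv :: "(real \<Rightarrow> real) \<Rightarrow> real \<Rightarrow> real \<Rightarrow> real \<Rightarrow> real" where
  "curve_deriv \<gamma> a b t = vector_derivative \<gamma> (at t within {a..b})"

definition action :: "(real \<times> real \<Rightarrow> real) \<Rightarrow> real \<Rightarrow> real \<Rightarrow> (real \<Rightarrow> real) \<Rightarrow> real" where
  "action L a b \<gamma> =
     Lim (at_right a) (\<lambda>s. integral {s..b} (\<lambda>t. L (\<gamma> t, curve_deriv \<gamma> a b t)))"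

definition action_defined :: "(real \<times> real \<Rightarrow> real) \<Rightarrow> real \<Rightarrow> real \<Rightarrow> (real \<Rightarrow> real) \<Rightarrow> bool" where
  "action_defined L a b \<gamma> \<longleftrightarrow>
     (\<forall>s\<in>{a<..b}. (\<lambda>t. L (\<gamma> t, curve_deriv \<gamma> a b t)) integrable_on {s..b}) \<and>
     (\<exists>l. ((\<lambda>s. integral {s..b} (\<lambda>t. L (\<gamma> t, curve_deriv \<gamma> a b t))) \<longlongrightarrow> l) (at_right a))"

definition admissible ::
  "(real \<times> real) set \<Rightarrow> (real \<times> real \<Rightarrow> real) \<Rightarrow> real \<Rightarrow> real \<Rightarrow> real \<Rightarrow> real \<Rightarrow> (real \<Rightarrow> real) set" where
  "admissible Om L a b \<alpha> \<beta> = {\<gamma>.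
      continuous_on {a..b} \<gamma> \<and>
      (\<forall>t\<in>{a<..b}. \<gamma> differentiable (at t within {a..b})) \<and>
      continuous_on {a<..b} (curve_deriv \<gamma> a b) \<and>
      (\<forall>t\<in>{a<..b}. (\<gamma> t, curve_deriv \<gamma> a b t) \<in> Om) \<and>
      \<gamma> a = \<alpha> \<and> \<gamma> b = \<beta> \<and>
      action_defined L a b \<gamma>}"

end

theory Submission imports Defs
begin


lemma pair_dist_le: "dist ((x::real, y::real)) (x + e * u, y + e * v) \<le> \<bar>e\<bar> * (\<bar>u\<bar> + \<bar>v\<bar>)"
proof -
  have "dist (x, y) (x + e * u, y + e * v) = sqrt ((e * u)^2 + (e * v)^2)"
    by (simp add: dist_Pair_Pair dist_real_def)
  also have "\<dots> \<le> abs (e * u) + abs (e * v)" by (rule sqrt_sum_squares_le_sum_abs)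
  also have "\<dots> = \<bar>e\<bar> * (\<bar>u\<bar> + \<bar>v\<bar>)" by (simp add: abs_mult distrib_left)
  finally show ?thesis .
qed

locale EL =
  fixes Om :: "(real \<times> real) set" and L Lx Ly :: "real \<times> real \<Rightarrow> real"
    and a b \<alpha> \<beta> :: real and \<gamma> :: "real \<Rightarrow> real"
  assumes Om_open: "open Om"
    and L_deriv: "\<And>p. p \<in> Om \<Longrightarrow>
         (L has_derivative (\<lambda>(h, k). Lx p * h + Ly p * k)) (at p)"
    and Lx_cont: "continuous_on Om Lx" and Ly_cont: "continuous_on Om Ly"
    and ab: "a < b"
    and \<gamma>X: "\<gamma> \<in> admissible Om L a b \<alpha> \<beta>"
    and extremum: "(\<forall>\<eta>\<in>admissible Om L a b \<alpha> \<beta>. action L a b \<gamma> \<le> action L a b \<eta>) \<or>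
                   (\<forall>\<eta>\<in>admissible Om L a b \<alpha> \<beta>. action L a b \<eta> \<le> action L a b \<gamma>)"
begin

abbreviation "d\<gamma> \<equiv> curve_deriv \<gamma> a b"

lemma L_cont: "continuous_on Om L"
  using L_deriv Om_open
  by (metis continuous_at_imp_continuous_on has_derivative_continuous)

lemma cont_\<gamma>: "continuous_on {a..b} \<gamma>"
  and diff_\<gamma>: "\<And>t. t\<in>{a<..b} \<Longrightarrow> \<gamma> differentiable (at t within {a..b})"
  and cont_d\<gamma>: "continuous_on {a<..b} d\<gamma>"
  and in_Om: "\<And>t. t\<in>{a<..b} \<Longrightarrow> (\<gamma> t, d\<gamma> t) \<in> Om"
  and \<gamma>a: "\<gamma> a = \<alpha>" and \<gamma>b: "\<gamma> b = \<beta>"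
  and act_def: "action_defined L a b \<gamma>"
  using \<gamma>X by (auto simp: admissible_def)

lemma \<gamma>_deriv: "t\<in>{a<..b} \<Longrightarrow> (\<gamma> has_real_derivative d\<gamma> t) (at t within {a..b})"
  using diff_\<gamma> unfolding curve_deriv_def has_real_derivative_iff_has_vector_derivative
  by (simp add: vector_derivative_works)

lemma pt_cont: "continuous_on {a<..b} (\<lambda>t. (\<gamma> t, d\<gamma> t))"
  by (intro continuous_on_Pair cont_d\<gamma> continuous_on_subset[OF cont_\<gamma>]) auto

lemma cont_comp:
  assumes "continuous_on Om f" "S \<subseteq> {a<..b}"
  shows "continuous_on S (\<lambda>t. f (\<gamma> t, d\<gamma> t))"
proof -
  have "(\<lambda>t. (\<gamma> t, d\<gamma> t)) ` S \<subseteq> Om" using in_Om assms(2) by auto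
  then show ?thesis
    using continuous_on_compose2[OF assms(1) continuous_on_subset[OF pt_cont assms(2)]] by auto
qed

lemma VL:
  assumes p: "a < p" "p < b"
    and hd: "\<And>t. t\<in>{a..b} \<Longrightarrow> (h has_real_derivative h' t) (at t within {a..b})"
    and h'c: "continuous_on {a..b} h'"
    and h0: "\<And>t. t\<in>{a..p} \<Longrightarrow> h t = 0 \<and> h' t = 0" and hb: "h b = 0"
  shows "integral {p..b} (\<lambda>t. Lx (\<gamma> t, d\<gamma> t) * h t + Ly (\<gamma> t, d\<gamma> t) * h' t) = 0"
proof -
  have hc: "continuous_on {a..b} h"
    using hd by (meson DERIV_continuous continuous_on_eq_continuous_within)
  let ?K = "(\<lambda>t. (\<gamma> t, d\<gamma> t)) ` {p..b}"
  have Ksub: "?K \<subseteq> Om" using in_Om p by auto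
  have "compact ?K"
    by (rule compact_continuous_image[OF continuous_on_subset[OF pt_cont]]) (use p in auto)
  then obtain \<delta> where \<delta>0: "\<delta> > 0" and \<delta>1: "\<And>x. x \<in> ?K \<Longrightarrow> \<exists>G\<in>{Om}. ball x \<delta> \<subseteq> G"
    by (rule Heine_Borel_lemma[of ?K "{Om}"]) (use Ksub Om_open in auto)
  have \<delta>: "\<delta> > 0" "\<And>x. x\<in>?K \<Longrightarrow> ball x \<delta> \<subseteq> Om"
    using \<delta>0 \<delta>1 by auto
  have "compact (h ` {a..b})" by (rule compact_continuous_image[OF hc]) simp
  then have "bounded (h ` {a..b})" by (rule compact_imp_bounded)
  then obtain B1 where B10: "\<forall>x\<in>h ` {a..b}. norm x \<le> B1" by (auto simp: bounded_iff)
  have B1: "\<bar>h t\<bar> \<le> B1" if "t\<in>{a..b}" for t using B10 that by auto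
  have "compact (h' ` {a..b})" by (rule compact_continuous_image[OF h'c]) simp
  then have "bounded (h' ` {a..b})" by (rule compact_imp_bounded)
  then obtain B2 where B20: "\<forall>x\<in>h' ` {a..b}. norm x \<le> B2" by (auto simp: bounded_iff)
  have B2: "\<bar>h' t\<bar> \<le> B2" if "t\<in>{a..b}" for t using B20 that by auto
  define B where "B = \<bar>B1\<bar> + \<bar>B2\<bar> + 1"
  have Bpos: "B > 0" unfolding B_def by simp
  define e where "e = \<delta> / B"
  have epos: "e > 0" unfolding e_def using \<delta> Bpos by simp
  define U where "U = {-e<..<e}"
  have U0: "0 \<in> U" unfolding U_def using epos by simp
  have inOm2: "(\<gamma> t + \<epsilon> * h t, d\<gamma> t + \<epsilon> * h' t) \<in> Om" if "\<epsilon> \<in> U" "t \<in> {a<..b}" for \<epsilon> t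
  proof (cases "t \<le> p")
    case True
    then show ?thesis using h0[of t] that in_Om[of t] by auto
  next
    case False
    then have tK: "(\<gamma> t, d\<gamma> t) \<in> ?K" using that by auto
    have "dist (\<gamma> t, d\<gamma> t) (\<gamma> t + \<epsilon> * h t, d\<gamma> t + \<epsilon> * h' t) \<le> \<bar>\<epsilon>\<bar> * (\<bar>h t\<bar> + \<bar>h' t\<bar>)"
      by (rule pair_dist_le)
    also have "\<dots> \<le> \<bar>\<epsilon>\<bar> * B"
      using B1[of t] B2[of t] that unfolding B_def
      by (intro mult_left_mono) auto
    also have "\<dots> < e * B"
      using that Bpos unfolding U_def by (intro mult_strict_right_mono) auto
    also have "\<dots> = \<delta>" unfolding e_def using Bpos by simp
    finally show ?thesis using \<delta>(2)[OF tK] by auto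
  qed
  define \<eta> where "\<eta> \<epsilon> = (\<lambda>t. \<gamma> t + \<epsilon> * h t)" for \<epsilon>
  have \<eta>_app: "\<eta> \<epsilon> t = \<gamma> t + \<epsilon> * h t" for \<epsilon> t by (simp add: \<eta>_def)
  have \<eta>_der: "(\<eta> \<epsilon> has_real_derivative d\<gamma> t + \<epsilon> * h' t) (at t within {a..b})"
    if "t \<in> {a<..b}" for \<epsilon> t
    unfolding \<eta>_def using \<gamma>_deriv[OF that] hd[of t] that
    by (auto intro!: derivative_eq_intros)
  have cd\<eta>: "curve_deriv (\<eta> \<epsilon>) a b t = d\<gamma> t + \<epsilon> * h' t" if "t \<in> {a<..b}" for \<epsilon> t
    unfolding curve_deriv_def[of "\<eta> \<epsilon>"]
    using vector_derivative_within_cbox[OF ab, of t "\<eta> \<epsilon>" "d\<gamma> t + \<epsilon> * h' t"] \<eta>_der[OF that] that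
    by (simp add: has_real_derivative_iff_has_vector_derivative)
  define E where "E \<epsilon> t = L (\<gamma> t + \<epsilon> * h t, d\<gamma> t + \<epsilon> * h' t)" for \<epsilon> t
  have inner_cont: "continuous_on {a<..b} (\<lambda>t. (\<gamma> t + \<epsilon> * h t, d\<gamma> t + \<epsilon> * h' t))" for \<epsilon>
    by (intro continuous_intros cont_d\<gamma> continuous_on_subset[OF cont_\<gamma>]
        continuous_on_subset[OF hc] continuous_on_subset[OF h'c]) auto
  have Econt: "continuous_on S (E \<epsilon>)" if "\<epsilon> \<in> U" "S \<subseteq> {a<..b}" for \<epsilon> S
  proof -
    have "(\<lambda>t. (\<gamma> t + \<epsilon> * h t, d\<gamma> t + \<epsilon> * h' t)) ` S \<subseteq> Om" using inOm2 that by auto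
    then show ?thesis unfolding E_def
      using continuous_on_compose2[OF L_cont continuous_on_subset[OF inner_cont that(2)]] by auto
  qed
  define F where "F \<epsilon> = integral {p..b} (E \<epsilon>)" for \<epsilon>
  obtain l where lim: "((\<lambda>s. integral {s..b} (\<lambda>t. L (\<gamma> t, d\<gamma> t))) \<longlongrightarrow> l) (at_right a)"
    using act_def unfolding action_defined_def by auto
  have act\<gamma>: "action L a b \<gamma> = l"
    unfolding action_def using tendsto_Lim[OF trivial_limit_at_right_real lim] .
  have adm: "\<eta> \<epsilon> \<in> admissible Om L a b \<alpha> \<beta> \<and> action L a b (\<eta> \<epsilon>) = l + (F \<epsilon> - F 0)"
    if \<epsilon>U: "\<epsilon> \<in> U" for \<epsilon>
  proof -
    have int_eq: "integral {s..b} (\<lambda>t. L (\<eta> \<epsilon> t, curve_deriv (\<eta> \<epsilon>) a b t)) = integral {s..b} (E \<epsilon>)"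
      if "s \<in> {a<..b}" for s
      using that by (intro integral_cong) (auto simp: cd\<eta> E_def \<eta>_app)
    have cont_new: "continuous_on {s..b} (\<lambda>t. L (\<eta> \<epsilon> t, curve_deriv (\<eta> \<epsilon>) a b t))"
      if "s \<in> {a<..b}" for s
    proof -
      have "continuous_on {s..b} (E \<epsilon>)" using that by (intro Econt[OF \<epsilon>U]) auto
      then show ?thesis
        by (rule continuous_on_eq) (use that in \<open>auto simp: cd\<eta> E_def \<eta>_app\<close>)
    qed
    have split: "integral {s..b} (\<lambda>t. L (\<eta> \<epsilon> t, curve_deriv (\<eta> \<epsilon>) a b t))
        = integral {s..b} (\<lambda>t. L (\<gamma> t, d\<gamma> t)) + (F \<epsilon> - F 0)"
      if s: "s \<in> {a<..<p}" for s
    proof -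
      have sab: "s \<in> {a<..b}" using s p by auto
      have i1: "integral {s..b} (E \<epsilon>) = integral {s..p} (E \<epsilon>) + F \<epsilon>"
      proof -
        have "E \<epsilon> integrable_on {s..b}"
          using s p by (intro integrable_continuous_interval Econt[OF \<epsilon>U]) auto
        then show ?thesis unfolding F_def by (metis Henstock_Kurzweil_Integration.integral_combine s p(2) greaterThanLessThan_iff less_imp_le)
      qed
      have i0: "integral {s..b} (E 0) = integral {s..p} (E 0) + F 0"
      proof -
        have "E 0 integrable_on {s..b}"
          using s p by (intro integrable_continuous_interval Econt[OF U0]) auto
        then show ?thesis unfolding F_def by (metis Henstock_Kurzweil_Integration.integral_combine s p(2) greaterThanLessThan_iff less_imp_le)
      qed
      have i2: "integral {s..p} (E \<epsilon>) = integral {s..p} (E 0)"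
        using s h0 by (intro integral_cong) (auto simp: E_def)
      have i3: "integral {s..b} (\<lambda>t. L (\<gamma> t, d\<gamma> t)) = integral {s..b} (E 0)"
        by (rule arg_cong[where f="integral {s..b}"]) (simp add: E_def fun_eq_iff)
      show ?thesis using int_eq[OF sab] i1 i0 i2 i3 by simp
    qed
    have lim2: "((\<lambda>s. integral {s..b} (\<lambda>t. L (\<eta> \<epsilon> t, curve_deriv (\<eta> \<epsilon>) a b t)))
        \<longlongrightarrow> l + (F \<epsilon> - F 0)) (at_right a)"
    proof (rule Lim_transform_eventually)
      show "((\<lambda>s. integral {s..b} (\<lambda>t. L (\<gamma> t, d\<gamma> t)) + (F \<epsilon> - F 0)) \<longlongrightarrow> l + (F \<epsilon> - F 0)) (at_right a)"
        by (intro tendsto_add lim tendsto_const)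
      show "\<forall>\<^sub>F s in at_right a. integral {s..b} (\<lambda>t. L (\<gamma> t, d\<gamma> t)) + (F \<epsilon> - F 0)
          = integral {s..b} (\<lambda>t. L (\<eta> \<epsilon> t, curve_deriv (\<eta> \<epsilon>) a b t))"
        using eventually_mono[OF eventually_at_right_real[OF p(1)]] split by force
    qed
    have "\<eta> \<epsilon> \<in> admissible Om L a b \<alpha> \<beta>"
      unfolding admissible_def
    proof (intro CollectI conjI ballI)
      show "continuous_on {a..b} (\<eta> \<epsilon>)" unfolding \<eta>_def by (intro continuous_intros cont_\<gamma> hc)
      show "\<eta> \<epsilon> differentiable at t within {a..b}" if "t \<in> {a<..b}" for t
        using \<eta>_der[OF that] by (auto simp: has_field_derivative_def intro: differentiableI)
      show "continuous_on {a<..b} (curve_deriv (\<eta> \<epsilon>) a b)"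
        by (rule continuous_on_eq[OF _ cd\<eta>[symmetric]])
          (intro continuous_intros cont_d\<gamma> continuous_on_subset[OF h'c], auto)
      show "(\<eta> \<epsilon> t, curve_deriv (\<eta> \<epsilon>) a b t) \<in> Om" if "t \<in> {a<..b}" for t
        using inOm2[OF \<epsilon>U that] cd\<eta>[OF that] by (simp add: \<eta>_app)
      show "\<eta> \<epsilon> a = \<alpha>" using h0[of a] p \<gamma>a by (simp add: \<eta>_def)
      show "\<eta> \<epsilon> b = \<beta>" using hb \<gamma>b by (simp add: \<eta>_def)
      show "action_defined L a b (\<eta> \<epsilon>)"
        unfolding action_defined_def
        using lim2 cont_new integrable_continuous_interval by blast
    qed
    moreover have "action L a b (\<eta> \<epsilon>) = l + (F \<epsilon> - F 0)"
      unfolding action_def using tendsto_Lim[OF trivial_limit_at_right_real lim2] .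
    ultimately show ?thesis by simp
  qed
  define P where "P = (\<lambda>z::real\<times>real. (\<gamma> (snd z) + fst z * h (snd z), d\<gamma> (snd z) + fst z * h' (snd z)))"
  define fx where "fx \<epsilon> t = Lx (P (\<epsilon>, t)) * h t + Ly (P (\<epsilon>, t)) * h' t" for \<epsilon> t
  have Pcont: "continuous_on (U \<times> {p..b}) P"
    unfolding P_def
    by (intro continuous_intros continuous_on_compose2[OF cont_\<gamma>] continuous_on_compose2[OF cont_d\<gamma>]
        continuous_on_compose2[OF hc] continuous_on_compose2[OF h'c]) (use p in auto)
  have Pin: "P ` (U \<times> {p..b}) \<subseteq> Om" using inOm2 p by (auto simp: P_def)
  have fxcont: "continuous_on (U \<times> cbox p b) (\<lambda>(x, t). fx x t)"
  proof -
    have e1: "(\<lambda>(x, t). fx x t) = (\<lambda>z. Lx (P z) * h (snd z) + Ly (P z) * h' (snd z))"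
      by (auto simp: fx_def fun_eq_iff)
    show ?thesis unfolding e1 cbox_interval
      by (intro continuous_intros continuous_on_compose2[OF Lx_cont Pcont Pin]
          continuous_on_compose2[OF Ly_cont Pcont Pin]
          continuous_on_compose2[OF hc] continuous_on_compose2[OF h'c]) (use p in auto)
  qed
  have fxd: "((\<lambda>\<epsilon>. E \<epsilon> t) has_field_derivative fx \<epsilon> t) (at \<epsilon> within U)"
    if "\<epsilon> \<in> U" "t \<in> cbox p b" for \<epsilon> t
  proof -
    have q: "(\<gamma> t + \<epsilon> * h t, d\<gamma> t + \<epsilon> * h' t) \<in> Om" using inOm2[of \<epsilon> t] that p by (auto simp: cbox_interval)
    have inner: "((\<lambda>\<epsilon>. (\<gamma> t + \<epsilon> * h t, d\<gamma> t + \<epsilon> * h' t)) has_derivative (\<lambda>d. (d * h t, d * h' t))) (at \<epsilon> within U)"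
      by (auto intro!: derivative_eq_intros)
    have "((\<lambda>\<epsilon>. L (\<gamma> t + \<epsilon> * h t, d\<gamma> t + \<epsilon> * h' t)) has_derivative
        (\<lambda>d. (\<lambda>(u, v). Lx (\<gamma> t + \<epsilon> * h t, d\<gamma> t + \<epsilon> * h' t) * u + Ly (\<gamma> t + \<epsilon> * h t, d\<gamma> t + \<epsilon> * h' t) * v) (d * h t, d * h' t))) (at \<epsilon> within U)"
      using has_derivative_compose[OF inner L_deriv[OF q]] by simp
    then show ?thesis unfolding has_field_derivative_def E_def
      by (rule has_derivative_eq_rhs) (auto simp: fx_def P_def fun_eq_iff algebra_simps)
  qed
  have intE: "E \<epsilon> integrable_on cbox p b" if "\<epsilon> \<in> U" for \<epsilon>
    unfolding cbox_interval
    by (rule integrable_continuous_interval, rule Econt[OF that]) (use p in auto)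
  have cU: "convex U" unfolding U_def by simp
  have Fder00: "((\<lambda>\<epsilon>. integral (cbox p b) (E \<epsilon>)) has_field_derivative integral (cbox p b) (fx 0)) (at 0 within U)"
    by (rule leibniz_rule_field_derivative[OF fxd intE fxcont U0 cU])
  have Feq: "F = (\<lambda>\<epsilon>. integral (cbox p b) (E \<epsilon>))"
    by (simp add: F_def fun_eq_iff cbox_interval)
  have Fder0: "(F has_field_derivative integral (cbox p b) (fx 0)) (at 0 within U)"
    using Fder00 unfolding Feq .
  have oU: "open U" unfolding U_def by simp
  have Fder: "(F has_real_derivative integral {p..b} (fx 0)) (at 0)"
    using Fder0 unfolding at_within_open[OF U0 oU] cbox_interval .
  have Ueq: "\<bar>0 - y\<bar> < e \<Longrightarrow> y \<in> U" for y unfolding U_def by auto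
  have "integral {p..b} (fx 0) = 0"
    using extremum
  proof
    assume mn: "\<forall>\<eta>'\<in>admissible Om L a b \<alpha> \<beta>. action L a b \<gamma> \<le> action L a b \<eta>'"
    have "\<forall>y. \<bar>0 - y\<bar> < e \<longrightarrow> F 0 \<le> F y"
    proof (intro allI impI)
      fix y assume "\<bar>0 - y\<bar> < e"
      then have yU: "y \<in> U" by (rule Ueq)
      have A1: "\<eta> y \<in> admissible Om L a b \<alpha> \<beta>" and A2: "action L a b (\<eta> y) = l + (F y - F 0)"
        using adm[OF yU] by auto
      have "action L a b \<gamma> \<le> action L a b (\<eta> y)" using mn A1 by blast
      then show "F 0 \<le> F y" using A2 act\<gamma> by simp
    qed
    then show ?thesis using DERIV_local_min[OF Fder epos] by blast
  next
    assume mx: "\<forall>\<eta>'\<in>admissible Om L a b \<alpha> \<beta>. action L a b \<eta>' \<le> action L a b \<gamma>"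
    have "\<forall>y. \<bar>0 - y\<bar> < e \<longrightarrow> F y \<le> F 0"
    proof (intro allI impI)
      fix y assume "\<bar>0 - y\<bar> < e"
      then have yU: "y \<in> U" by (rule Ueq)
      have A1: "\<eta> y \<in> admissible Om L a b \<alpha> \<beta>" and A2: "action L a b (\<eta> y) = l + (F y - F 0)"
        using adm[OF yU] by auto
      have "action L a b (\<eta> y) \<le> action L a b \<gamma>" using mx A1 by blast
      then show "F y \<le> F 0" using A2 act\<gamma> by simp
    qed
    then show ?thesis using DERIV_local_max[OF Fder epos] by blast
  qed
  moreover have "fx 0 = (\<lambda>t. Lx (\<gamma> t, d\<gamma> t) * h t + Ly (\<gamma> t, d\<gamma> t) * h' t)"
    by (rule ext) (simp add: fx_def P_def)
  ultimately show ?thesis by metis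
qed

lemma intc:
  fixes f :: "real \<Rightarrow> real"
  assumes c: "continuous_on {a..b} f" and ap: "a \<le> p"
  shows "f integrable_on {p..b}"
proof -
  have "continuous_on {p..b} f" using c by (rule continuous_on_subset) (use ap in auto)
  then show ?thesis by (rule integrable_continuous_interval)
qed

lemma EL_at:
  assumes t: "t \<in> {a<..b}"
  shows "((\<lambda>s. Ly (\<gamma> s, d\<gamma> s)) has_real_derivative Lx (\<gamma> t, d\<gamma> t)) (at t within {a..b})"
proof -
  define p where "p = (a + t) / 2"
  have p: "a < p" "p < t" "p < b" using t unfolding p_def by auto
  have mx: "(\<lambda>s. max s p) ` {a..b} \<subseteq> {p..b}" using p by auto
  have cmx: "continuous_on {a..b} (\<lambda>s. max s p)" by (intro continuous_intros)
  define lf where "lf s = Lx (\<gamma> (max s p), d\<gamma> (max s p))" for s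
  define LY where "LY s = Ly (\<gamma> (max s p), d\<gamma> (max s p))" for s
  have lfc: "continuous_on {a..b} lf"
    unfolding lf_def using p
    by (intro continuous_on_compose2[OF cont_comp[OF Lx_cont, of "{p..b}"] cmx mx]) auto
  have LYc: "continuous_on {a..b} LY"
    unfolding LY_def using p
    by (intro continuous_on_compose2[OF cont_comp[OF Ly_cont, of "{p..b}"] cmx mx]) auto
  define A where "A x = integral {a..x} lf" for x
  have Ad: "(A has_real_derivative lf x) (at x within {a..b})" if "x \<in> {a..b}" for x
    unfolding A_def by (rule integral_has_real_derivative[OF lfc that])
  have Ac: "continuous_on {a..b} A"
    using Ad by (meson DERIV_continuous continuous_on_eq_continuous_within)
  define G where "G s = LY s - A s" for s
  have Gc: "continuous_on {a..b} G" unfolding G_def by (intro continuous_intros LYc Ac)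
  define w where "w s = max (s - p) 0" for s
  have wc: "continuous_on {a..b} w" unfolding w_def by (intro continuous_intros)
  define Iw where "Iw = integral {p..b} w"
  have Iw: "Iw \<noteq> 0"
  proof
    assume "Iw = 0"
    then have "(w has_integral 0) (cbox p b)"
      unfolding Iw_def cbox_interval using intc[OF wc] p
      by (metis integrable_integral less_imp_le)
    then have "w b = 0"
      using p by (intro has_integral_0_cbox_imp_0[of p b w])
        (auto simp: w_def cbox_interval intro!: continuous_intros)
    then show False using p by (simp add: w_def)
  qed
  define cc where "cc = integral {p..b} (\<lambda>s. w s * G s) / Iw"
  define \<phi> where "\<phi> s = w s * (G s - cc)" for s
  have \<phi>c: "continuous_on {a..b} \<phi>" unfolding \<phi>_def by (intro continuous_intros wc Gc)
  have wGi: "(\<lambda>s. w s * G s) integrable_on {p..b}"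
    using p by (intro intc continuous_intros wc Gc) auto
  have wi: "w integrable_on {p..b}" using p by (intro intc wc) auto
  have int\<phi>: "integral {p..b} \<phi> = 0"
  proof -
    have "integral {p..b} \<phi> = integral {p..b} (\<lambda>s. w s * G s - cc * w s)"
      unfolding \<phi>_def by (simp add: algebra_simps)
    also have "\<dots> = integral {p..b} (\<lambda>s. w s * G s) - cc * Iw"
      using wGi wi by (subst integral_diff) (auto simp: Iw_def intro: integrable_on_mult_right)
    also have "\<dots> = 0" using Iw by (simp add: cc_def)
    finally show ?thesis .
  qed
  define h where "h x = integral {a..x} \<phi>" for x
  have hd: "(h has_real_derivative \<phi> x) (at x within {a..b})" if "x \<in> {a..b}" for x
    unfolding h_def by (rule integral_has_real_derivative[OF \<phi>c that])
  have hc: "continuous_on {a..b} h"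
    using hd by (meson DERIV_continuous continuous_on_eq_continuous_within)
  have \<phi>0: "\<phi> s = 0" if "s \<le> p" for s using that by (simp add: \<phi>_def w_def)
  have h0: "h x = 0 \<and> \<phi> x = 0" if "x \<in> {a..p}" for x
  proof -
    have "h x = integral {a..x} (\<lambda>_. 0::real)"
      unfolding h_def using that by (intro integral_cong) (auto intro: \<phi>0)
    then show ?thesis using that \<phi>0 by simp
  qed
  have hb: "h b = 0"
  proof -
    have "\<phi> integrable_on {a..b}" by (rule integrable_continuous_interval[OF \<phi>c])
    then have "integral {a..p} \<phi> + integral {p..b} \<phi> = integral {a..b} \<phi>"
      using p by (intro Henstock_Kurzweil_Integration.integral_combine) auto
    moreover have "integral {a..p} \<phi> = 0" using h0[of p] p by (simp add: h_def)
    ultimately show ?thesis using int\<phi> by (simp add: h_def)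
  qed
  have V: "integral {p..b} (\<lambda>s. Lx (\<gamma> s, d\<gamma> s) * h s + Ly (\<gamma> s, d\<gamma> s) * \<phi> s) = 0"
    by (rule VL[OF p(1) p(3) hd \<phi>c h0 hb])
  have V2: "integral {p..b} (\<lambda>s. lf s * h s + (G s + A s) * \<phi> s) = 0"
  proof -
    have "integral {p..b} (\<lambda>s. lf s * h s + (G s + A s) * \<phi> s)
        = integral {p..b} (\<lambda>s. Lx (\<gamma> s, d\<gamma> s) * h s + Ly (\<gamma> s, d\<gamma> s) * \<phi> s)"
      by (intro integral_cong) (auto simp: lf_def G_def LY_def max_def)
    then show ?thesis using V by simp
  qed
  have FTC: "((\<lambda>s. lf s * h s + A s * \<phi> s) has_integral (A b * h b - A p * h p)) {p..b}"
  proof (rule fundamental_theorem_of_calculus)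
    show "p \<le> b" using p by simp
    fix x assume x: "x \<in> {p..b}"
    then have xab: "x \<in> {a..b}" using p by auto
    have "((\<lambda>s. A s * h s) has_real_derivative lf x * h x + A x * \<phi> x) (at x within {a..b})"
      using Ad[OF xab] hd[OF xab] by (auto intro!: derivative_eq_intros)
    then show "((\<lambda>s. A s * h s) has_vector_derivative lf x * h x + A x * \<phi> x) (at x within {p..b})"
      unfolding has_real_derivative_iff_has_vector_derivative[symmetric]
      by (rule DERIV_subset) (use p in auto)
  qed
  have "A b * h b - A p * h p = 0" using hb h0[of p] p by simp
  with FTC have I1: "integral {p..b} (\<lambda>s. lf s * h s + A s * \<phi> s) = 0"
    by (simp add: integral_unique)
  have i1: "(\<lambda>s. lf s * h s + A s * \<phi> s) integrable_on {p..b}"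
    using p by (intro intc continuous_intros lfc hc Ac \<phi>c) auto
  have i2: "(\<lambda>s. lf s * h s + (G s + A s) * \<phi> s) integrable_on {p..b}"
    using p by (intro intc continuous_intros lfc hc Ac \<phi>c Gc) auto
  have IG: "integral {p..b} (\<lambda>s. G s * \<phi> s) = 0"
  proof -
    have "integral {p..b} (\<lambda>s. G s * \<phi> s)
        = integral {p..b} (\<lambda>s. (lf s * h s + (G s + A s) * \<phi> s) - (lf s * h s + A s * \<phi> s))"
      by (simp add: algebra_simps)
    also have "\<dots> = 0" using integral_diff[OF i2 i1] V2 I1 by simp
    finally show ?thesis .
  qed
  have i3: "(\<lambda>s. G s * \<phi> s) integrable_on {p..b}"
    using p by (intro intc continuous_intros \<phi>c Gc) auto
  have i4: "\<phi> integrable_on {p..b}" using p by (intro intc \<phi>c) auto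
  have Isq: "((\<lambda>s. w s * (G s - cc)^2) has_integral 0) (cbox p b)"
  proof -
    have "integral {p..b} (\<lambda>s. w s * (G s - cc)^2) = integral {p..b} (\<lambda>s. G s * \<phi> s - cc * \<phi> s)"
      by (intro integral_cong) (simp add: \<phi>_def power2_eq_square algebra_simps)
    also have "\<dots> = 0" using integral_diff[OF i3, of "\<lambda>s. cc * \<phi> s"] i4 IG int\<phi>
      by (simp add: integrable_on_mult_right)
    finally have "integral {p..b} (\<lambda>s. w s * (G s - cc)^2) = 0" .
    moreover have "(\<lambda>s. w s * (G s - cc)^2) integrable_on {p..b}"
      using p by (intro intc continuous_intros wc Gc) auto
    ultimately show ?thesis unfolding cbox_interval by (metis integrable_integral)
  qed
  have Geq: "G s = cc" if "s \<in> {p<..b}" for s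
  proof -
    have "w s * (G s - cc)^2 = 0"
      using that p by (intro has_integral_0_cbox_imp_0[OF _ _ Isq])
        (auto simp: cbox_interval w_def intro!: continuous_on_subset[OF Gc] continuous_intros)
    then show ?thesis using that by (simp add: w_def)
  qed
  have "((\<lambda>s. cc + A s) has_real_derivative lf t) (at t within {a..b})"
    using Ad[of t] t by (auto intro!: derivative_eq_intros)
  then have "((\<lambda>s. Ly (\<gamma> s, d\<gamma> s)) has_real_derivative lf t) (at t within {a..b})"
  proof (rule has_field_derivative_transform_within[where d = "t - p"])
    show "0 < t - p" using p by simp
    show "t \<in> {a..b}" using t by auto
    fix x assume x: "x \<in> {a..b}" "dist x t < t - p"
    then have xp: "x \<in> {p<..b}" by (auto simp: dist_real_def)
    then show "cc + A x = Ly (\<gamma> x, d\<gamma> x)"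
      using Geq[OF xp] by (auto simp: G_def LY_def max_def)
  qed
  moreover have "lf t = Lx (\<gamma> t, d\<gamma> t)" using p by (simp add: lf_def)
  ultimately show ?thesis by simp
qed

end

lemma open_I: "open {x::real. ereal c < ereal x \<and> ereal x < d}"
proof -
  have "{x::real. ereal c < ereal x \<and> ereal x < d} = {c<..} \<inter> {x. ereal x < d}" by auto
  moreover have "open {x::real. ereal x < d}"
  proof (cases d)
    case (real r) then have "{x::real. ereal x < d} = {..<r}" by auto
    then show ?thesis by simp
  next
    case PInf then have "{x::real. ereal x < d} = UNIV" by auto
    then show ?thesis by simp
  next
    case MInf then have "{x::real. ereal x < d} = {}" by auto
    then show ?thesis by simp
  qed
  ultimately show ?thesis by (metis open_Int open_greaterThan)
qed

theorem theorem2: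
  fixes c :: real and d :: ereal and I J :: "real set" and Om :: "(real \<times> real) set"
    and L :: "real \<times> real \<Rightarrow> real" and Lx Ly :: "real \<times> real \<Rightarrow> real"
    and a b \<alpha> \<beta> :: real and \<gamma> :: "real \<Rightarrow> real"
  assumes I_def: "I = {x. ereal c < ereal x \<and> ereal x < d}"
    and J_open: "open J" and J_interval: "is_interval J"
    and O_def: "Om = I \<times> J"
    and L_deriv: "\<And>p. p \<in> Om \<Longrightarrow>
         (L has_derivative (\<lambda>(h, k). Lx p * h + Ly p * k)) (at p)"
    and Lx_cont: "continuous_on Om Lx" and Ly_cont: "continuous_on Om Ly"
    and ab: "a < b"
    and \<gamma>X: "\<gamma> \<in> admissible Om L a b \<alpha> \<beta>"
    and extremum: "(\<forall>\<eta>\<in>admissible Om L a b \<alpha> \<beta>. action L a b \<gamma> \<le> action L a b \<eta>) \<or>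
                   (\<forall>\<eta>\<in>admissible Om L a b \<alpha> \<beta>. action L a b \<eta> \<le> action L a b \<gamma>)"
  shows "\<forall>t\<in>{a<..b}.
    ((\<lambda>s. Ly (\<gamma> s, curve_deriv \<gamma> a b s)) has_real_derivative
       Lx (\<gamma> t, curve_deriv \<gamma> a b t)) (at t within {a..b})"
proof
  fix t assume t: "t \<in> {a<..b}"
  have "open Om" unfolding O_def I_def using open_I J_open by (intro open_Times)
  then interpret EL Om L Lx Ly a b \<alpha> \<beta> \<gamma>
    by (rule EL.intro[OF _ L_deriv Lx_cont Ly_cont ab \<gamma>X extremum])
  show "((\<lambda>s. Ly (\<gamma> s, curve_deriv \<gamma> a b s)) has_real_derivative
       Lx (\<gamma> t, curve_deriv \<gamma> a b t)) (at t within {a..b})"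
    by (rule EL_at[OF t])
qed

end
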